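(* The map $\psi$ maps $\Sigma(D_n)$ into $\Sigma(A_{n-1})$ and, for every $J\subseteq\{2,\dots,n-1\}$: $\psi(Y_J)=\sum_{F\in\mathcal{F}_n,\,F\subseteq J\triangle(J+1)}2^{\#F}P_F$; $\psi(Y_{\{1\}\cup J})=\psi(Y_{\{1'\}\cup J})=\sum_{\{1\}\cup F\in\mathcal{F}_n,\,F\subseteq J\triangle(J+1)}2^{\#F}P_{\{1\}\cup F}$; $\psi(Y_{\{1',1\}\cup J})=\sum_{F\in\mathcal{F}_n,\,F\subseteq J\triangle(\{2\}\cup(J+1))}2^{\#F}P_F$; and $\psi(X_J)=2^{\#J}\sum_{F\in\mathcal{F}_n,\,F\subseteq J\cup(J+1)}P_F$; $\psi(X_{\{1\}\cup J})=\psi(X_{\{1'\}\cup J})=2^{\#J}\sum_{F\in\mathcal{F}_n,\,F\subseteq J\cup(J+1)\cup\{1\}}P_F$; $\psi(X_{\{1',1\}\cup J})=2^{\#J+1}\sum_{F\in\mathcal{F}_n,\,F\subseteq J\cup(J+1)\cup\{1,2\}}P_F$.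
   Context: $D_n$: signed permutations $w=w_1\dots w_n$ of $[n]$ (values in $\{\pm1,\dots,\pm n\}$, ordered $\cdots<-2<-1<1<2<\cdots$) with an even number of negative entries; the descent set of $w$ is the subset of $\{1',1,\dots,n-1\}$ where $1'$ is a descent iff $-w_1>w_2$ and $i\in[n-1]$ is a descent iff $w_i>w_{i+1}$; $Y_J=\sum_{\mathrm{Des}(w)=J}w$, $X_J=\sum_{I\subseteq J}Y_I$, $\Sigma(D_n)=\mathrm{span}\{Y_J\}$. $\psi:\mathbb{Q}D_n\to\mathbb{Q}\mathfrak{S}_n$ is the linear extension of $w\mapsto|w_1|\dots|w_n|$. $\Sigma(A_{n-1})$ is the descent algebra of $\mathfrak{S}_n$ (span of $\sum_{\mathrm{Des}(u)=J}u$, $\mathrm{Des}(u)=\{i:u_i>u_{i+1}\}$). For $u\in\mathfrak{S}_n$, $\mathrm{Peak}(u)=\{i\in[n-1]:u_{i-1}<u_i>u_{i+1}\}$ with $u_0=0$; $\mathcal{F}_n$: subsets of $[n-1]$ with no two consecutive integers; $P_F=\sum_{\mathrm{Peak}(u)=F}u$. $J+1=\{j+1:j\in J\}$, $\triangle$ = symmetric difference. *)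

theory Defs
  imports Complex_Main
begin

(* Permutations of [n] in one-line notation u = u_1 ... u_n (u_i = u ! (i-1)). *)
definition perms :: "nat \<Rightarrow> nat list set" where
  "perms n = {u. distinct u \<and> set u = {1..n}}"

definition Dn :: "nat \<Rightarrow> int list set" where
  "Dn n = {w. distinct (map abs w) \<and> set (map abs w) = {1..int n}
              \<and> even (length (filter (\<lambda>x. x < 0) w))}"

(* Descent labels: 1' and the ordinary positions i. *)
datatype dlabel = OneP | Nd nat

definition dlabels :: "nat \<Rightarrow> dlabel set" where
  "dlabels n = insert OneP (Nd ` {1..n-1})"

definition DesD :: "nat \<Rightarrow> int list \<Rightarrow> dlabel set" where
  "DesD n w = (if - (w ! 0) > w ! 1 then {OneP} else {})
      \<union> {Nd i | i. i \<in> {1..n-1} \<and> w ! (i-1) > w ! i}"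

(* Elements of the group algebra Q D_n as coefficient functions int list => rat *)
definition Y :: "nat \<Rightarrow> dlabel set \<Rightarrow> int list \<Rightarrow> rat" where
  "Y n J w = (if w \<in> Dn n \<and> DesD n w = J then 1 else 0)"

definition X :: "nat \<Rightarrow> dlabel set \<Rightarrow> int list \<Rightarrow> rat" where
  "X n J w = (\<Sum>I\<in>Pow J. Y n I w)"

definition SigmaD :: "nat \<Rightarrow> (int list \<Rightarrow> rat) set" where
  "SigmaD n = {(\<lambda>w. \<Sum>J\<in>Pow (dlabels n). c J * Y n J w) | c. True}"

definition DesA :: "nat \<Rightarrow> nat list \<Rightarrow> nat set" where
  "DesA n u = {i \<in> {1..n-1}. u ! (i-1) > u ! i}"

definition B :: "nat \<Rightarrow> nat set \<Rightarrow> nat list \<Rightarrow> rat" where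
  "B n J u = (if u \<in> perms n \<and> DesA n u = J then 1 else 0)"

definition SigmaA :: "nat \<Rightarrow> (nat list \<Rightarrow> rat) set" where
  "SigmaA n = {(\<lambda>u. \<Sum>J\<in>Pow {1..n-1}. c J * B n J u) | c. True}"

(* psi: linear extension of w |-> |w_1| ... |w_n| *)
definition absl :: "int list \<Rightarrow> nat list" where
  "absl w = map (\<lambda>x. nat \<bar>x\<bar>) w"

definition psi :: "nat \<Rightarrow> (int list \<Rightarrow> rat) \<Rightarrow> nat list \<Rightarrow> rat" where
  "psi n f u = (\<Sum>w\<in>{w \<in> Dn n. absl w = u}. f w)"

(* Peaks, with the convention u_0 = 0 *)
definition uval :: "nat list \<Rightarrow> nat \<Rightarrow> nat" where
  "uval u i = (if i = 0 then 0 else u ! (i-1))"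

definition Peak :: "nat \<Rightarrow> nat list \<Rightarrow> nat set" where
  "Peak n u = {i \<in> {1..n-1}. uval u (i-1) < uval u i \<and> uval u i > uval u (i+1)}"

definition Fn :: "nat \<Rightarrow> nat set set" where
  "Fn n = {F. F \<subseteq> {1..n-1} \<and> (\<forall>i\<in>F. i + 1 \<notin> F)}"

definition P :: "nat \<Rightarrow> nat set \<Rightarrow> nat list \<Rightarrow> rat" where
  "P n F u = (if u \<in> perms n \<and> Peak n u = F then 1 else 0)"

definition shift1 :: "nat set \<Rightarrow> nat set" where
  "shift1 J = (\<lambda>j. j + 1) ` J"

definition symdiff :: "'a set \<Rightarrow> 'a set \<Rightarrow> 'a set" where
  "symdiff A C = (A - C) \<union> (C - A)"

end

theory Submission
  imports Defs "HOL-Library.FuncSet"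
begin

definition sg :: "nat \<Rightarrow> nat list \<Rightarrow> nat set \<Rightarrow> int list" where
  "sg n u N = map (\<lambda>j. if j \<in> N then - int (u!(j-1)) else int (u!(j-1))) [1..<n+1]"

definition Ev :: "nat \<Rightarrow> nat set set" where
  "Ev n = {N. N \<subseteq> {1..n} \<and> even (card N)}"

lemma sg_length[simp]: "length (sg n u N) = n"
  by (simp add: sg_def)

lemma sg_nth: "k < n \<Longrightarrow> sg n u N ! k = (if Suc k \<in> N then - int (u!k) else int (u!k))"
  by (simp add: sg_def del: upt_Suc)

lemma perms_pos: "u \<in> perms n \<Longrightarrow> k < n \<Longrightarrow> u ! k \<ge> 1 \<and> u ! k \<le> n"
proof -
  assume a: "u \<in> perms n" "k < n"
  have "length u = n" using a(1) unfolding perms_def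
    by (metis (mono_tags, lifting) card_atLeastAtMost diff_Suc_1 distinct_card mem_Collect_eq)
  hence "u ! k \<in> set u" using a by simp
  thus ?thesis using a(1) unfolding perms_def by auto
qed

lemma perms_len: "u \<in> perms n \<Longrightarrow> length u = n"
  unfolding perms_def
  by (metis (mono_tags, lifting) card_atLeastAtMost diff_Suc_1 distinct_card mem_Collect_eq)

lemma perms_dist: "u \<in> perms n \<Longrightarrow> distinct u"
  unfolding perms_def by auto

lemma absl_sg: "u \<in> perms n \<Longrightarrow> absl (sg n u N) = u"
proof -
  assume a: "u \<in> perms n"
  show ?thesis
  proof (rule nth_equalityI)
    show "length (absl (sg n u N)) = length u" using perms_len[OF a] by (simp add: absl_def)
    fix i assume "i < length (absl (sg n u N))"
    hence i: "i < n" by (simp add: absl_def)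
    thus "absl (sg n u N) ! i = u ! i" by (simp add: absl_def sg_nth)
  qed
qed

lemma neg_count_sg: "u \<in> perms n \<Longrightarrow> N \<subseteq> {1..n} \<Longrightarrow>
  length (filter (\<lambda>x. x < 0) (sg n u N)) = card N"
proof -
  assume a: "u \<in> perms n" "N \<subseteq> {1..n}"
  have "length (filter (\<lambda>x. x < 0) (sg n u N)) =
      length (filter (\<lambda>j. (if j \<in> N then - int (u!(j-1)) else int (u!(j-1))) < 0) [1..<n+1])"
    by (simp add: sg_def filter_map o_def)
  also have "\<dots> = card {j \<in> set [1..<n+1]. (if j \<in> N then - int (u!(j-1)) else int (u!(j-1))) < 0}"
    by (subst distinct_length_filter) (auto intro: arg_cong[where f=card] simp del: upt_Suc)
  also have "{j \<in> set [1..<n+1]. (if j \<in> N then - int (u!(j-1)) else int (u!(j-1))) < 0} = N"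
  proof -
    have "\<And>j. j \<in> {1..n} \<Longrightarrow> u!(j-1) \<ge> 1" using perms_pos[OF a(1)] by force
    thus ?thesis using a(2) by force
  qed
  finally show ?thesis .
qed

lemma sg_in_Dn: "u \<in> perms n \<Longrightarrow> N \<in> Ev n \<Longrightarrow> sg n u N \<in> Dn n"
proof -
  assume a: "u \<in> perms n" "N \<in> Ev n"
  have m: "map abs (sg n u N) = map int u"
  proof (rule nth_equalityI)
    show "length (map abs (sg n u N)) = length (map int u)" using perms_len[OF a(1)] by simp
    fix i assume "i < length (map abs (sg n u N))"
    thus "map abs (sg n u N) ! i = map int u ! i" using perms_len[OF a(1)] by (simp add: sg_nth)
  qed
  have "distinct (map int u)" using perms_dist[OF a(1)] by (simp add: distinct_map)
  moreover have "set (map int u) = {1..int n}"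
  proof -
    have "set u = {1..n}" using a(1) unfolding perms_def by auto
    hence "set (map int u) = int ` {1..n}" by simp
    also have "\<dots> = {1..int n}" by (simp add: image_int_atLeastAtMost)
    finally show ?thesis .
  qed
  moreover have "even (length (filter (\<lambda>x. x < 0) (sg n u N)))"
    using neg_count_sg[OF a(1)] a(2) unfolding Ev_def by auto
  ultimately show ?thesis unfolding Dn_def using m by (simp only: mem_Collect_eq)
qed

lemma Dn_len: "w \<in> Dn n \<Longrightarrow> length w = n"
proof -
  assume "w \<in> Dn n"
  hence "distinct (map abs w)" "set (map abs w) = {1..int n}" unfolding Dn_def by auto
  hence "length (map abs w) = card {1..int n}" by (metis distinct_card)
  thus ?thesis by simp
qed

lemma absl_Dn_perms: "w \<in> Dn n \<Longrightarrow> absl w \<in> perms n"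
proof -
  assume a: "w \<in> Dn n"
  hence d: "distinct (map abs w)" and s: "set (map abs w) = {1..int n}" unfolding Dn_def by auto
  have e: "absl w = map nat (map abs w)" by (simp add: absl_def)
  have "inj_on nat (set (map abs w))" using s by (auto simp: inj_on_def)
  hence "distinct (map nat (map abs w))" using d by (metis distinct_map)
  hence "distinct (absl w)" using e by simp
  moreover have "set (absl w) = {1..n}"
  proof -
    have "set (absl w) = nat ` set (map abs w)" using e by (simp only: set_map)
    also have "\<dots> = nat ` {1..int n}" using s by simp
    finally have "set (absl w) = nat ` {1..int n}" .
    also have "\<dots> = {1..n}"
    proof
      show "nat ` {1..int n} \<subseteq> {1..n}" by auto
      show "{1..n} \<subseteq> nat ` {1..int n}"
      proof
        fix x assume "x \<in> {1..n}"
        hence "int x \<in> {1..int n}" "x = nat (int x)" by auto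
        thus "x \<in> nat ` {1..int n}" by blast
      qed
    qed
    finally show ?thesis .
  qed
  ultimately show ?thesis unfolding perms_def by simp
qed

lemma sg_bij: assumes u: "u \<in> perms n"
  shows "bij_betw (sg n u) (Ev n) {w \<in> Dn n. absl w = u}"
proof (rule bij_betwI')
  fix N M assume N: "N \<in> Ev n" and M: "M \<in> Ev n"
  show "(sg n u N = sg n u M) = (N = M)"
  proof
    assume eq: "sg n u N = sg n u M"
    have "\<And>j. j \<in> {1..n} \<Longrightarrow> (j \<in> N) = (j \<in> M)"
    proof -
      fix j assume j: "j \<in> {1..n}"
      hence k: "j - 1 < n" "Suc (j-1) = j" by auto
      have "sg n u N ! (j-1) = sg n u M ! (j-1)" using eq by simp
      moreover have "u ! (j-1) \<ge> 1" using perms_pos[OF u k(1)] by simp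
      ultimately show "(j \<in> N) = (j \<in> M)" using k by (auto simp: sg_nth split: if_splits)
    qed
    thus "N = M" using N M unfolding Ev_def by blast
  qed simp
next
  fix N assume N: "N \<in> Ev n"
  show "sg n u N \<in> {w \<in> Dn n. absl w = u}" using sg_in_Dn[OF u N] absl_sg[OF u] by simp
next
  fix w assume w: "w \<in> {w \<in> Dn n. absl w = u}"
  define N where "N = {j \<in> {1..n}. w ! (j-1) < 0}"
  have lw: "length w = n" using w Dn_len by auto
  have eqw: "w = sg n u N"
  proof (rule nth_equalityI)
    show "length w = length (sg n u N)" using lw by simp
    fix i assume i: "i < length w"
    have "u ! i = nat \<bar>w ! i\<bar>" using w i by (auto simp: absl_def)
    thus "w ! i = sg n u N ! i" using i lw by (auto simp: sg_nth N_def)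
  qed
  have NN: "N \<subseteq> {1..n}" unfolding N_def by auto
  have "even (length (filter (\<lambda>x. x < 0) w))" using w unfolding Dn_def by auto
  hence "even (card N)" using neg_count_sg[OF u NN] eqw by simp
  hence "N \<in> Ev n" using NN unfolding Ev_def by simp
  thus "\<exists>N \<in> Ev n. w = sg n u N" using eqw by blast
qed

lemma psi_perm: "u \<in> perms n \<Longrightarrow> psi n f u = (\<Sum>N\<in>Ev n. f (sg n u N))"
  unfolding psi_def by (rule sum.reindex_bij_betw[symmetric, OF sg_bij])

lemma psi_nperm: "u \<notin> perms n \<Longrightarrow> psi n f u = 0"
proof -
  assume "u \<notin> perms n"
  hence e: "{w \<in> Dn n. absl w = u} = {}" using absl_Dn_perms by blast
  show ?thesis unfolding psi_def e by simp
qed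

definition dof :: "nat \<Rightarrow> nat set \<Rightarrow> nat set \<Rightarrow> dlabel set" where
  "dof n D N = (if (if 1 \<in> D then 1 \<in> N else 2 \<in> N) then {OneP} else {})
     \<union> {Nd i | i. i \<in> {1..n-1} \<and> (if i \<in> D then i \<notin> N else Suc i \<in> N)}"

lemma DesD_sg: assumes u: "u \<in> perms n" and n: "n \<ge> 2"
  shows "DesD n (sg n u N) = dof n (DesA n u) N"
proof -
  have key: "\<And>i. i \<in> {1..n-1} \<Longrightarrow> (sg n u N ! (i-1) > sg n u N ! i) =
       (if i \<in> DesA n u then i \<notin> N else Suc i \<in> N)"
  proof -
    fix i assume i: "i \<in> {1..n-1}"
    have a: "u!(i-1) \<ge> 1" "u ! i \<ge> 1" using perms_pos[OF u] i by auto
    have "u!(i-1) \<noteq> u ! i" using perms_dist[OF u] perms_len[OF u] i by (auto simp: nth_eq_iff_index_eq)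
    moreover have "(i \<in> DesA n u) = (u!(i-1) > u!i)" using i by (simp add: DesA_def)
    moreover have "Suc (i-1) = i" using i by auto
    ultimately show "?thesis i" using a i by (auto simp: sg_nth)
  qed
  have key1: "(- (sg n u N ! 0) > sg n u N ! 1) = (if 1 \<in> DesA n u then 1 \<in> N else 2 \<in> N)"
  proof -
    have a: "u!0 \<ge> 1" "u ! 1 \<ge> 1" using perms_pos[OF u] n by auto
    have "u!0 \<noteq> u ! 1" using perms_dist[OF u] perms_len[OF u] n by (auto simp: nth_eq_iff_index_eq)
    moreover have "(1 \<in> DesA n u) = (u!0 > u!1)" using n by (auto simp add: DesA_def)
    ultimately show ?thesis using a n by (auto simp: sg_nth numeral_2_eq_2)
  qed
  show ?thesis unfolding DesD_def dof_def using key key1 by auto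
qed

lemma Y_sg: "u \<in> perms n \<Longrightarrow> n \<ge> 2 \<Longrightarrow> N \<in> Ev n \<Longrightarrow>
   Y n S (sg n u N) = (if dof n (DesA n u) N = S then 1 else 0)"
  using sg_in_Dn DesD_sg unfolding Y_def by simp

lemma X_eq: "finite S \<Longrightarrow> X n S w = (if w \<in> Dn n \<and> DesD n w \<subseteq> S then 1 else 0)"
proof -
  assume f: "finite S"
  have "X n S w = (\<Sum>I\<in>Pow S. if w \<in> Dn n \<and> DesD n w = I then 1 else 0)"
    unfolding X_def Y_def by simp
  also have "\<dots> = (\<Sum>I\<in>Pow S. if DesD n w = I then (if w \<in> Dn n then 1 else 0) else 0)"
    by (rule sum.cong) auto
  also have "\<dots> = (if DesD n w \<in> Pow S then (if w \<in> Dn n then 1 else 0) else 0)"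
    using f by (subst sum.delta') auto
  finally show ?thesis by auto
qed

lemma psiY: "u \<in> perms n \<Longrightarrow> n \<ge> 2 \<Longrightarrow>
   psi n (Y n S) u = of_nat (card {N \<in> Ev n. dof n (DesA n u) N = S})"
proof -
  assume u: "u \<in> perms n" and n: "n \<ge> 2"
  have fin: "finite (Ev n)" unfolding Ev_def by (rule finite_subset[of _ "Pow {1..n}"]) auto
  have "psi n (Y n S) u = (\<Sum>N\<in>Ev n. if dof n (DesA n u) N = S then 1 else 0)"
    using psi_perm[OF u] Y_sg[OF u n] by simp
  also have "\<dots> = of_nat (card {N \<in> Ev n. dof n (DesA n u) N = S})"
    using fin by (simp add: sum.If_cases Int_def)
  finally show ?thesis .
qed

lemma psiX: "u \<in> perms n \<Longrightarrow> n \<ge> 2 \<Longrightarrow> finite S \<Longrightarrow>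
   psi n (X n S) u = of_nat (card {N \<in> Ev n. dof n (DesA n u) N \<subseteq> S})"
proof -
  assume u: "u \<in> perms n" and n: "n \<ge> 2" and f: "finite S"
  have fin: "finite (Ev n)" unfolding Ev_def by (rule finite_subset[of _ "Pow {1..n}"]) auto
  have "psi n (X n S) u = (\<Sum>N\<in>Ev n. if dof n (DesA n u) N \<subseteq> S then 1 else 0)"
    using psi_perm[OF u] X_eq[OF f] sg_in_Dn[OF u] DesD_sg[OF u n] by simp
  also have "\<dots> = of_nat (card {N \<in> Ev n. dof n (DesA n u) N \<subseteq> S})"
    using fin by (simp add: sum.If_cases Int_def)
  finally show ?thesis .
qed

lemma card_bool_set: "card {b::bool. Q b} = (if \<exists>b. Q b then if \<forall>b. Q b then 2 else 1 else 0)"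
proof (cases "Q True"; cases "Q False")
  assume "Q True" "Q False"
  hence "{b. Q b} = {True, False}" by (intro set_eqI, case_tac x) auto
  thus ?thesis using \<open>Q True\<close> \<open>Q False\<close> by auto
next
  assume "Q True" "\<not> Q False"
  hence "{b. Q b} = {True}" by (intro set_eqI, case_tac x) auto
  thus ?thesis using \<open>Q True\<close> \<open>\<not> Q False\<close> by auto
next
  assume "\<not> Q True" "Q False"
  hence "{b. Q b} = {False}" by (intro set_eqI, case_tac x) auto
  thus ?thesis using \<open>\<not> Q True\<close> \<open>Q False\<close> by auto
next
  assume "\<not> Q True" "\<not> Q False"
  hence "{b. Q b} = {}" by (intro set_eqI, case_tac x) auto
  thus ?thesis using \<open>\<not> Q True\<close> \<open>\<not> Q False\<close> by (simp add: ex_bool_eq all_bool_eq)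
qed

lemma card_subsets_prod:
  assumes fin: "finite I"
  shows "card {N. N \<subseteq> I \<and> (\<forall>j\<in>I. Q j (j \<in> N))} = (\<Prod>j\<in>I. card {b. Q j b})"
proof -
  let ?S = "{N. N \<subseteq> I \<and> (\<forall>j\<in>I. Q j (j \<in> N))}"
  have "bij_betw (\<lambda>N. restrict (\<lambda>j. j \<in> N) I) ?S (PiE I (\<lambda>j. {b. Q j b}))"
  proof (rule bij_betwI[where g = "\<lambda>f. {j \<in> I. f j}"])
    show "(\<lambda>N. restrict (\<lambda>j. j \<in> N) I) \<in> ?S \<rightarrow> PiE I (\<lambda>j. {b. Q j b})" by auto
    show "(\<lambda>f. {j \<in> I. f j}) \<in> PiE I (\<lambda>j. {b. Q j b}) \<rightarrow> ?S" by auto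
    show "\<And>x. x \<in> ?S \<Longrightarrow> {j \<in> I. restrict (\<lambda>j. j \<in> x) I j} = x" by auto
    show "\<And>y. y \<in> PiE I (\<lambda>j. {b. Q j b}) \<Longrightarrow> restrict (\<lambda>j. j \<in> {j \<in> I. y j}) I = y"
      by (auto simp: PiE_def extensional_def restrict_def fun_eq_iff)
  qed
  hence "card ?S = card (PiE I (\<lambda>j. {b. Q j b}))" by (rule bij_betw_same_card)
  also have "\<dots> = (\<Prod>j\<in>I. card {b. Q j b})" using fin by (rule card_PiE)
  finally show ?thesis .
qed

lemma card_subsets_even:
  assumes fin: "finite I" and j0: "j0 \<in> I" and fr: "\<forall>b. Q j0 b"
  shows "2 * card {N. N \<subseteq> I \<and> (\<forall>j\<in>I. Q j (j \<in> N)) \<and> even (card N)} =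
         card {N. N \<subseteq> I \<and> (\<forall>j\<in>I. Q j (j \<in> N))}"
proof -
  let ?S = "{N. N \<subseteq> I \<and> (\<forall>j\<in>I. Q j (j \<in> N))}"
  let ?E = "{N. N \<subseteq> I \<and> (\<forall>j\<in>I. Q j (j \<in> N)) \<and> even (card N)}"
  let ?O = "{N. N \<subseteq> I \<and> (\<forall>j\<in>I. Q j (j \<in> N)) \<and> odd (card N)}"
  define t where "t N = (if j0 \<in> N then N - {j0} else insert j0 N)" for N
  have fS: "finite ?S" by (rule finite_subset[of _ "Pow I"]) (auto simp: fin)
  have tS: "\<And>N. N \<in> ?S \<Longrightarrow> t N \<in> ?S"
  proof -
    fix N assume N: "N \<in> ?S"
    show "t N \<in> ?S"
    proof (simp, intro conjI ballI)
      show "t N \<subseteq> I" using N j0 by (auto simp: t_def)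
      fix j assume j: "j \<in> I"
      show "Q j (j \<in> t N)"
      proof (cases "j = j0")
        case True thus ?thesis using fr by simp
      next
        case False
        hence "(j \<in> t N) = (j \<in> N)" by (auto simp: t_def)
        thus ?thesis using N j by simp
      qed
    qed
  qed
  have tt: "\<And>N. t (t N) = N" by (auto simp: t_def)
  have cpar: "\<And>N. N \<in> ?S \<Longrightarrow> even (card (t N)) = odd (card N)"
  proof -
    fix N assume N: "N \<in> ?S"
    hence fN: "finite N" using fin finite_subset by blast
    show "even (card (t N)) = odd (card N)"
    proof (cases "j0 \<in> N")
      case True
      hence "card N = Suc (card (N - {j0}))" using fN by (metis card_Suc_Diff1)
      thus ?thesis using True by (simp add: t_def)
    next
      case False
      thus ?thesis using fN by (simp add: t_def)
    qed
  qed
  have "bij_betw t ?E ?O"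
  proof (rule bij_betwI[where g = t])
    show "t \<in> ?E \<rightarrow> ?O" using tS cpar by auto
    show "t \<in> ?O \<rightarrow> ?E" using tS cpar by auto
  qed (simp_all add: tt)
  hence "card ?E = card ?O" by (rule bij_betw_same_card)
  moreover have "card ?S = card ?E + card ?O"
  proof -
    have "?S = ?E \<union> ?O" by auto
    moreover have "?E \<inter> ?O = {}" by auto
    moreover have "finite ?E" using fS by (rule rev_finite_subset) auto
    moreover have "finite ?O" using fS by (rule rev_finite_subset) auto
    ultimately show ?thesis by (simp add: card_Un_disjoint)
  qed
  ultimately show ?thesis by simp
qed

lemma prod_card_bool:
  assumes fin: "finite I"
  shows "(\<Prod>j\<in>I. card {b::bool. Q j b}) =
     (if \<forall>j\<in>I. \<exists>b. Q j b then 2 ^ card {j \<in> I. \<forall>b. Q j b} else 0)"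
proof (cases "\<forall>j\<in>I. \<exists>b. Q j b")
  case True
  have "(\<Prod>j\<in>I. card {b::bool. Q j b}) = (\<Prod>j\<in>I. if \<forall>b. Q j b then 2 else 1)"
    using True by (intro prod.cong) (auto simp: card_bool_set)
  also have "\<dots> = 2 ^ card {j \<in> I. \<forall>b. Q j b}"
    using fin by (simp add: prod.If_cases Int_def)
  finally show ?thesis using True by simp
next
  case False
  then obtain j where "j \<in> I" "\<not> (\<exists>b. Q j b)" by blast
  hence "card {b::bool. Q j b} = 0" by (simp add: card_bool_set)
  hence "(\<Prod>j\<in>I. card {b::bool. Q j b}) = 0" using fin \<open>j \<in> I\<close> by (metis prod_zero_iff)
  thus ?thesis using False by simp
qed

definition Sof :: "bool \<Rightarrow> nat set \<Rightarrow> dlabel set" where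
  "Sof a E = (if a then insert OneP (Nd ` E) else Nd ` E)"

definition rr :: "nat set \<Rightarrow> nat set \<Rightarrow> nat \<Rightarrow> bool" where
  "rr D N i = (if i \<in> D then i \<notin> N else Suc i \<in> N)"

definition r1 :: "nat set \<Rightarrow> nat set \<Rightarrow> bool" where
  "r1 D N = (if 1 \<in> D then 1 \<in> N else 2 \<in> N)"

lemma OneP_notin_Nd[simp]: "OneP \<notin> Nd ` E" by auto

lemma OneP_dof: "(OneP \<in> dof n D N) = r1 D N"
  by (simp add: dof_def r1_def)

lemma Nd_dof: "(Nd i \<in> dof n D N) = (i \<in> {1..n-1} \<and> rr D N i)"
  by (auto simp add: dof_def rr_def)

lemma dof_eq: assumes E: "E \<subseteq> {1..n-1}"
  shows "(dof n D N = Sof a E) = (r1 D N = a \<and> (\<forall>i\<in>{1..n-1}. rr D N i = (i \<in> E)))"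
proof
  assume h: "dof n D N = Sof a E"
  have "r1 D N = (OneP \<in> Sof a E)" using h OneP_dof by metis
  hence "r1 D N = a" by (simp add: Sof_def)
  moreover have "\<forall>i\<in>{1..n-1}. rr D N i = (i \<in> E)"
  proof
    fix i assume i: "i \<in> {1..n-1}"
    have "(i \<in> {1..n-1} \<and> rr D N i) = (Nd i \<in> Sof a E)" using h Nd_dof by metis
    thus "rr D N i = (i \<in> E)" using i by (auto simp: Sof_def)
  qed
  ultimately show "r1 D N = a \<and> (\<forall>i\<in>{1..n-1}. rr D N i = (i \<in> E))" by blast
next
  assume h: "r1 D N = a \<and> (\<forall>i\<in>{1..n-1}. rr D N i = (i \<in> E))"
  show "dof n D N = Sof a E"
  proof (rule set_eqI)
    fix x show "(x \<in> dof n D N) = (x \<in> Sof a E)"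
    proof (cases x)
      case OneP thus ?thesis using h OneP_dof by (auto simp: Sof_def)
    next
      case (Nd i) thus ?thesis using h Nd_dof E by (auto simp: Sof_def)
    qed
  qed
qed

lemma dof_sub: assumes E: "E \<subseteq> {1..n-1}"
  shows "(dof n D N \<subseteq> Sof a E) = ((r1 D N \<longrightarrow> a) \<and> (\<forall>i\<in>{1..n-1}. rr D N i \<longrightarrow> i \<in> E))"
proof
  assume h: "dof n D N \<subseteq> Sof a E"
  have "r1 D N \<longrightarrow> OneP \<in> Sof a E" using h OneP_dof by blast
  hence "r1 D N \<longrightarrow> a" by (cases a) (auto simp: Sof_def)
  moreover have "\<forall>i\<in>{1..n-1}. rr D N i \<longrightarrow> i \<in> E"
  proof (intro ballI impI)
    fix i assume i: "i \<in> {1..n-1}" "rr D N i"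
    hence "Nd i \<in> Sof a E" using h Nd_dof by blast
    thus "i \<in> E" by (auto simp: Sof_def split: if_splits)
  qed
  ultimately show "(r1 D N \<longrightarrow> a) \<and> (\<forall>i\<in>{1..n-1}. rr D N i \<longrightarrow> i \<in> E)" by blast
next
  assume h: "(r1 D N \<longrightarrow> a) \<and> (\<forall>i\<in>{1..n-1}. rr D N i \<longrightarrow> i \<in> E)"
  show "dof n D N \<subseteq> Sof a E"
  proof
    fix x assume x: "x \<in> dof n D N"
    show "x \<in> Sof a E"
    proof (cases x)
      case OneP thus ?thesis using h x OneP_dof by (auto simp: Sof_def)
    next
      case (Nd i) thus ?thesis using h x Nd_dof by (auto simp: Sof_def)
    qed
  qed
qed

definition PY :: "nat set \<Rightarrow> nat set \<Rightarrow> bool \<Rightarrow> nat \<Rightarrow> bool \<Rightarrow> bool" where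
  "PY D E a j b = ((j \<in> D \<longrightarrow> b = (j \<notin> E)) \<and> (2 \<le> j \<and> j-1 \<notin> D \<longrightarrow> b = (j-1 \<in> E))
     \<and> (j = 1 \<and> 1 \<in> D \<longrightarrow> b = a) \<and> (j = 2 \<and> 1 \<notin> D \<longrightarrow> b = a))"

definition PX :: "nat set \<Rightarrow> nat set \<Rightarrow> bool \<Rightarrow> nat \<Rightarrow> bool \<Rightarrow> bool" where
  "PX D E a j b = ((j \<in> D \<and> j \<notin> E \<longrightarrow> b) \<and> (2 \<le> j \<and> j-1 \<notin> D \<and> j-1 \<notin> E \<longrightarrow> \<not> b)
     \<and> (j = 1 \<and> 1 \<in> D \<and> \<not> a \<longrightarrow> \<not> b) \<and> (j = 2 \<and> 1 \<notin> D \<and> \<not> a \<longrightarrow> \<not> b))"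

lemma locY: assumes D: "D \<subseteq> {1..n-1}" and n: "n \<ge> 2"
  shows "(r1 D N = a \<and> (\<forall>i\<in>{1..n-1}. rr D N i = (i \<in> E))) = (\<forall>j\<in>{1..n}. PY D E a j (j \<in> N))"
proof
  assume h: "r1 D N = a \<and> (\<forall>i\<in>{1..n-1}. rr D N i = (i \<in> E))"
  show "\<forall>j\<in>{1..n}. PY D E a j (j \<in> N)"
  proof
    fix j assume j: "j \<in> {1..n}"
    have c1: "j \<in> D \<longrightarrow> (j \<in> N) = (j \<notin> E)"
    proof
      assume "j \<in> D" hence "j \<in> {1..n-1}" using D by auto
      hence "rr D N j = (j \<in> E)" using h by blast
      thus "(j \<in> N) = (j \<notin> E)" using \<open>j \<in> D\<close> by (auto simp: rr_def)
    qed
    have c2: "2 \<le> j \<and> j-1 \<notin> D \<longrightarrow> (j \<in> N) = (j-1 \<in> E)"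
    proof
      assume a2: "2 \<le> j \<and> j-1 \<notin> D" hence "j-1 \<in> {1..n-1}" using j by auto
      hence "rr D N (j-1) = (j-1 \<in> E)" using h by blast
      moreover have "Suc (j-1) = j" using a2 by auto
      ultimately show "(j \<in> N) = (j-1 \<in> E)" using a2 by (auto simp: rr_def)
    qed
    have c3: "j = 1 \<and> 1 \<in> D \<longrightarrow> (j \<in> N) = a" using h by (auto simp: r1_def)
    have c4: "j = 2 \<and> 1 \<notin> D \<longrightarrow> (j \<in> N) = a" using h by (auto simp: r1_def)
    show "PY D E a j (j \<in> N)" unfolding PY_def using c1 c2 c3 c4 by blast
  qed
next
  assume h: "\<forall>j\<in>{1..n}. PY D E a j (j \<in> N)"
  have "r1 D N = a"
  proof (cases "1 \<in> D")
    case True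
    have "PY D E a 1 (1 \<in> N)" using h n by auto
    hence "(1 \<in> N) = a" using True unfolding PY_def by blast
    thus ?thesis using True by (simp add: r1_def)
  next
    case False
    have "PY D E a 2 (2 \<in> N)" using h n by auto
    hence "(2 \<in> N) = a" using False unfolding PY_def by auto
    thus ?thesis using False by (simp add: r1_def)
  qed
  moreover have "\<forall>i\<in>{1..n-1}. rr D N i = (i \<in> E)"
  proof
    fix i assume i: "i \<in> {1..n-1}"
    show "rr D N i = (i \<in> E)"
    proof (cases "i \<in> D")
      case True
      have "PY D E a i (i \<in> N)" using h i by auto
      thus ?thesis using True by (auto simp: PY_def rr_def)
    next
      case False
      have "PY D E a (Suc i) (Suc i \<in> N)" using h i by auto
      thus ?thesis using False i by (auto simp: PY_def rr_def)
    qed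
  qed
  ultimately show "r1 D N = a \<and> (\<forall>i\<in>{1..n-1}. rr D N i = (i \<in> E))" by blast
qed

lemma locX: assumes D: "D \<subseteq> {1..n-1}" and n: "n \<ge> 2"
  shows "((r1 D N \<longrightarrow> a) \<and> (\<forall>i\<in>{1..n-1}. rr D N i \<longrightarrow> i \<in> E)) = (\<forall>j\<in>{1..n}. PX D E a j (j \<in> N))"
proof
  assume h: "(r1 D N \<longrightarrow> a) \<and> (\<forall>i\<in>{1..n-1}. rr D N i \<longrightarrow> i \<in> E)"
  show "\<forall>j\<in>{1..n}. PX D E a j (j \<in> N)"
  proof
    fix j assume j: "j \<in> {1..n}"
    have c1: "j \<in> D \<and> j \<notin> E \<longrightarrow> j \<in> N"
    proof
      assume a1: "j \<in> D \<and> j \<notin> E" hence "j \<in> {1..n-1}" using D by auto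
      hence "rr D N j \<longrightarrow> j \<in> E" using h by blast
      thus "j \<in> N" using a1 by (auto simp: rr_def)
    qed
    have c2: "2 \<le> j \<and> j-1 \<notin> D \<and> j-1 \<notin> E \<longrightarrow> j \<notin> N"
    proof
      assume a2: "2 \<le> j \<and> j-1 \<notin> D \<and> j-1 \<notin> E" hence "j-1 \<in> {1..n-1}" using j by auto
      hence "rr D N (j-1) \<longrightarrow> j-1 \<in> E" using h by blast
      moreover have "Suc (j-1) = j" using a2 by auto
      ultimately show "j \<notin> N" using a2 by (auto simp: rr_def)
    qed
    have c3: "j = 1 \<and> 1 \<in> D \<and> \<not> a \<longrightarrow> j \<notin> N" using h by (auto simp: r1_def)
    have c4: "j = 2 \<and> 1 \<notin> D \<and> \<not> a \<longrightarrow> j \<notin> N" using h by (auto simp: r1_def)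
    show "PX D E a j (j \<in> N)" unfolding PX_def using c1 c2 c3 c4 by blast
  qed
next
  assume h: "\<forall>j\<in>{1..n}. PX D E a j (j \<in> N)"
  have "r1 D N \<longrightarrow> a"
  proof (cases "1 \<in> D")
    case True
    have "PX D E a 1 (1 \<in> N)" using h n by auto
    thus ?thesis using True by (auto simp add: PX_def r1_def)
  next
    case False
    have "PX D E a 2 (2 \<in> N)" using h n by auto
    thus ?thesis using False by (auto simp add: PX_def r1_def)
  qed
  moreover have "\<forall>i\<in>{1..n-1}. rr D N i \<longrightarrow> i \<in> E"
  proof
    fix i assume i: "i \<in> {1..n-1}"
    show "rr D N i \<longrightarrow> i \<in> E"
    proof (cases "i \<in> D")
      case True
      have "PX D E a i (i \<in> N)" using h i by auto
      thus ?thesis using True by (auto simp: PX_def rr_def)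
    next
      case False
      have "PX D E a (Suc i) (Suc i \<in> N)" using h i by auto
      thus ?thesis using False i by (auto simp: PX_def rr_def)
    qed
  qed
  ultimately show "(r1 D N \<longrightarrow> a) \<and> (\<forall>i\<in>{1..n-1}. rr D N i \<longrightarrow> i \<in> E)" by blast
qed

lemma count_even:
  assumes fin: "finite I" and fr: "(\<forall>j\<in>I. \<exists>b. Q j b) \<Longrightarrow> \<exists>j\<in>I. \<forall>b. Q j b"
  shows "card {N. N \<subseteq> I \<and> (\<forall>j\<in>I. Q j (j \<in> N)) \<and> even (card N)} =
     (if \<forall>j\<in>I. \<exists>b. Q j b then 2 ^ (card {j \<in> I. \<forall>b. Q j b} - 1) else 0)"
proof (cases "\<forall>j\<in>I. \<exists>b. Q j b")
  case True
  then obtain j0 where j0: "j0 \<in> I" "\<forall>b. Q j0 b" using fr by blast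
  have "2 * card {N. N \<subseteq> I \<and> (\<forall>j\<in>I. Q j (j \<in> N)) \<and> even (card N)} =
     2 ^ card {j \<in> I. \<forall>b. Q j b}"
    using card_subsets_even[of I j0 Q, OF fin j0(1) j0(2)] card_subsets_prod[OF fin] prod_card_bool[OF fin] True by simp
  moreover have "card {j \<in> I. \<forall>b. Q j b} \<ge> 1"
  proof -
    have "finite {j \<in> I. \<forall>b. Q j b}" using fin by simp
    moreover have "j0 \<in> {j \<in> I. \<forall>b. Q j b}" using j0 by simp
    ultimately show ?thesis by (metis One_nat_def Suc_leI card_gt_0_iff empty_iff)
  qed
  ultimately show ?thesis using True
    by (metis (no_types, lifting) Suc_diff_1 mult_cancel_left1 power_Suc zero_neq_numeral
        less_le_trans zero_less_one mult_cancel_left)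
next
  case False
  have "card {N. N \<subseteq> I \<and> (\<forall>j\<in>I. Q j (j \<in> N))} = 0"
    using card_subsets_prod[OF fin] prod_card_bool[OF fin] False by simp
  moreover have "finite {N. N \<subseteq> I \<and> (\<forall>j\<in>I. Q j (j \<in> N))}"
    by (rule finite_subset[of _ "Pow I"]) (auto simp: fin)
  ultimately have "{N. N \<subseteq> I \<and> (\<forall>j\<in>I. Q j (j \<in> N))} = {}" by simp
  hence e: "{N. N \<subseteq> I \<and> (\<forall>j\<in>I. Q j (j \<in> N)) \<and> even (card N)} = {}" by blast
  have "card {N. N \<subseteq> I \<and> (\<forall>j\<in>I. Q j (j \<in> N)) \<and> even (card N)} = 0" by (simp only: e card.empty)
  thus ?thesis by (simp only: if_not_P[OF False])
qed

lemma card_Suc_filter: "card {j \<in> {1..Suc m}. Q j} = card {j \<in> {1..m}. Q j} + (if Q (Suc m) then 1 else 0)"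
proof -
  have "{j \<in> {1..Suc m}. Q j} = (if Q (Suc m) then insert (Suc m) {j \<in> {1..m}. Q j} else {j \<in> {1..m}. Q j})"
    by (auto simp: le_Suc_eq)
  thus ?thesis by simp
qed

lemma CY: "(m::nat) \<ge> 1 \<Longrightarrow> card {j \<in> {1..m}. j \<notin> D \<and> (j = 1 \<or> j-1 \<in> D)} + (if m \<in> D then 1 else 0)
   = card {p \<in> {1..m}. p \<in> D \<and> (p = 1 \<or> p-1 \<notin> D)} + (if 1 \<in> D then 0 else 1)"
proof (induction m)
  case 0 thus ?case by simp
next
  case (Suc m)
  show ?case
  proof (cases "m = 0")
    case True thus ?thesis by (simp only: card_Suc_filter) simp
  next
    case False
    hence IH: "card {j \<in> {1..m}. j \<notin> D \<and> (j = 1 \<or> j-1 \<in> D)} + (if m \<in> D then 1 else 0)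
   = card {p \<in> {1..m}. p \<in> D \<and> (p = 1 \<or> p-1 \<notin> D)} + (if 1 \<in> D then 0 else 1)" using Suc by simp
    show ?thesis using IH False
      by (simp only: card_Suc_filter) (cases "m \<in> D"; cases "Suc m \<in> D"; simp)
  qed
qed

definition fX :: "nat set \<Rightarrow> nat set \<Rightarrow> bool \<Rightarrow> nat \<Rightarrow> bool" where
  "fX D E a j = (\<not> (j \<in> D \<and> j \<notin> E) \<and> \<not> (2 \<le> j \<and> j-1 \<notin> D \<and> j-1 \<notin> E)
     \<and> \<not> (j = 1 \<and> 1 \<in> D \<and> \<not> a) \<and> \<not> (j = 2 \<and> 1 \<notin> D \<and> \<not> a))"

definition cX :: "nat set \<Rightarrow> nat set \<Rightarrow> bool \<Rightarrow> nat \<Rightarrow> bool" where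
  "cX D E a j = (\<not> ((j \<in> D \<and> j \<notin> E) \<and> ((2 \<le> j \<and> j-1 \<notin> D \<and> j-1 \<notin> E)
     \<or> (j = 1 \<and> 1 \<in> D \<and> \<not> a) \<or> (j = 2 \<and> 1 \<notin> D \<and> \<not> a))))"

lemma CX: "(\<forall>j\<in>{1..(k::nat)+2}. cX D E a j) \<Longrightarrow>
  card {j \<in> {1..k+2}. fX D E a j} + (if k+2 \<in> D \<and> k+2 \<notin> E then 1 else 0)
   = card {j \<in> {1..k+1}. j \<in> E} + (if a \<or> 1 \<notin> E then 1 else 0)"
proof (induction k)
  case 0
  have c1: "cX D E a (Suc 0)" and c2: "cX D E a (Suc (Suc 0))" using 0 by auto
  have "card {j \<in> {1..Suc (Suc 0)}. fX D E a j} + (if Suc (Suc 0) \<in> D \<and> Suc (Suc 0) \<notin> E then 1 else 0)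
     = card {j \<in> {1..Suc 0}. j \<in> E} + (if a \<or> 1 \<notin> E then 1 else 0)"
    using c1 c2 apply (simp only: card_Suc_filter)
    by (simp add: fX_def cX_def) (cases "1 \<in> D"; cases "1 \<in> E"; cases "2 \<in> D"; cases "2 \<in> E"; cases a; simp)
  thus ?case by (simp only: add_0 numeral_2_eq_2 One_nat_def)
next
  case (Suc k)
  have IH: "card {j \<in> {1..k+2}. fX D E a j} + (if k+2 \<in> D \<and> k+2 \<notin> E then 1 else 0)
   = card {j \<in> {1..k+1}. j \<in> E} + (if a \<or> 1 \<notin> E then 1 else 0)" using Suc by auto
  have c: "cX D E a (k+3)" using Suc.prems by auto
  have e1: "card {j \<in> {1..Suc k+2}. fX D E a j} = card {j \<in> {1..k+2}. fX D E a j} + (if fX D E a (k+3) then 1 else 0)"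
    using card_Suc_filter[where Q="fX D E a" and m="k+2"] by (simp add: eval_nat_numeral)
  have e2: "card {j \<in> {1..Suc k+1}. j \<in> E} = card {j \<in> {1..k+1}. j \<in> E} + (if k+2 \<in> E then 1 else 0)"
    using card_Suc_filter[where Q="\<lambda>j. j \<in> E" and m="k+1"] by (simp add: eval_nat_numeral)
  have f: "fX D E a (k+3) = (\<not> (k+3 \<in> D \<and> k+3 \<notin> E) \<and> \<not> (k+2 \<notin> D \<and> k+2 \<notin> E))"
    by (simp add: fX_def)
  have c': "(k+3 \<in> D \<and> k+3 \<notin> E) \<longrightarrow> \<not> (k+2 \<notin> D \<and> k+2 \<notin> E)" using c by (simp add: cX_def) blast
  show ?case unfolding e1 e2 using IH f c'
    by (cases "k+3 \<in> D"; cases "k+3 \<in> E"; cases "k+2 \<in> D"; cases "k+2 \<in> E"; simp add: numeral_3_eq_3)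
qed

lemma DesA_sub: "DesA n u \<subseteq> {1..n-1}" by (auto simp: DesA_def)

lemma mem_card_ge1: "x \<in> A \<Longrightarrow> finite A \<Longrightarrow> card A \<ge> 1"
proof -
  assume a: "x \<in> A" "finite A"
  hence "card A > 0" using card_gt_0_iff by blast
  thus ?thesis by simp
qed

lemma freeY: "{j \<in> {1..n::nat}. \<forall>b. PY D E a j b} = {j \<in> {1..n}. j \<notin> D \<and> (j = 1 \<or> j-1 \<in> D)}"
  by (auto simp: PY_def all_bool_eq)

lemma cntY: assumes D: "D \<subseteq> {1..(n::nat)-1}" and n: "n \<ge> 2"
  shows "card {j \<in> {1..n}. j \<notin> D \<and> (j = 1 \<or> j-1 \<in> D)} =
     card {p \<in> {1..n}. p \<in> D \<and> (p = 1 \<or> p-1 \<notin> D)} + (if 1 \<in> D then 0 else 1)"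
proof -
  have "n \<notin> D" using D n by auto
  thus ?thesis using CY[of n D] n by simp
qed

lemma Ev_eq: "{N \<in> Ev n. Pr N} = {N. N \<subseteq> {1..n} \<and> Pr N \<and> even (card N)}"
  unfolding Ev_def by auto

definition consY :: "nat set \<Rightarrow> nat set \<Rightarrow> bool \<Rightarrow> nat \<Rightarrow> bool" where
  "consY D E a n = ((\<forall>p\<in>{2..n-1}. p \<in> D \<and> p-1 \<notin> D \<longrightarrow> ((p \<in> E) = (p-1 \<notin> E)))
      \<and> (1 \<in> D \<longrightarrow> a = (1 \<notin> E)) \<and> (1 \<notin> D \<longrightarrow> a = (1 \<in> E)))"

lemma consY_eq: assumes D: "D \<subseteq> {1..n-1}" and n: "n \<ge> 2"
  shows "(\<forall>j\<in>{1..n}. \<exists>b. PY D E a j b) = consY D E a n"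
proof
  assume h: "\<forall>j\<in>{1..n}. \<exists>b. PY D E a j b"
  have A: "\<forall>p\<in>{2..n-1}. p \<in> D \<and> p-1 \<notin> D \<longrightarrow> ((p \<in> E) = (p-1 \<notin> E))"
  proof (intro ballI impI)
    fix p assume p: "p \<in> {2..n-1}" "p \<in> D \<and> p-1 \<notin> D"
    then obtain b where "PY D E a p b" using h by force
    thus "(p \<in> E) = (p-1 \<notin> E)" using p unfolding PY_def by auto
  qed
  have B: "1 \<in> D \<longrightarrow> a = (1 \<notin> E)"
  proof
    assume "1 \<in> D"
    obtain b where "PY D E a 1 b" using h n by force
    thus "a = (1 \<notin> E)" using \<open>1 \<in> D\<close> unfolding PY_def by auto
  qed
  have C: "1 \<notin> D \<longrightarrow> a = (1 \<in> E)"
  proof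
    assume "1 \<notin> D"
    obtain b where "PY D E a 2 b" using h n by force
    thus "a = (1 \<in> E)" using \<open>1 \<notin> D\<close> unfolding PY_def by auto
  qed
  show "consY D E a n" unfolding consY_def using A B C by blast
next
  assume h: "consY D E a n"
  have h1: "\<And>p. p \<in> {2..n-1} \<Longrightarrow> p \<in> D \<Longrightarrow> p-1 \<notin> D \<Longrightarrow> (p \<in> E) = (p-1 \<notin> E)"
    using h unfolding consY_def by blast
  have h2: "1 \<in> D \<Longrightarrow> a = (1 \<notin> E)" and h3: "1 \<notin> D \<Longrightarrow> a = (1 \<in> E)"
    using h unfolding consY_def by blast+
  show "\<forall>j\<in>{1..n}. \<exists>b. PY D E a j b"
  proof
    fix j assume j: "j \<in> {1..n}"
    show "\<exists>b. PY D E a j b"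
    proof (cases "j \<in> D")
      case True
      show ?thesis
      proof (intro exI[of _ "j \<notin> E"])
        show "PY D E a j (j \<notin> E)"
        proof (cases "j = 1")
          case True thus ?thesis using h2 \<open>j \<in> D\<close> unfolding PY_def by auto
        next
          case False
          hence jj: "j \<in> {2..n-1}" using j \<open>j \<in> D\<close> D by auto
          have A: "j-1 \<notin> D \<longrightarrow> (j \<notin> E) = (j-1 \<in> E)" using h1[OF jj \<open>j \<in> D\<close>] by blast
          have B: "j = 2 \<and> 1 \<notin> D \<longrightarrow> (j \<notin> E) = a" using h1[OF jj \<open>j \<in> D\<close>] h3 by auto
          show ?thesis unfolding PY_def using A B False by blast
        qed
      qed
    next
      case False
      show ?thesis
      proof (cases "2 \<le> j \<and> j-1 \<notin> D")
        case True
        have B: "j = 2 \<and> 1 \<notin> D \<longrightarrow> (j-1 \<in> E) = a" using h3 by auto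
        show ?thesis
        proof (intro exI[of _ "j-1 \<in> E"])
          show "PY D E a j (j-1 \<in> E)" unfolding PY_def using False True B by auto
        qed
      next
        case F2: False
        have "j = 1 \<or> (2 \<le> j \<and> j-1 \<in> D)" using F2 j by auto
        show ?thesis
        proof (intro exI[of _ a])
          show "PY D E a j a" unfolding PY_def using False F2 \<open>j = 1 \<or> (2 \<le> j \<and> j-1 \<in> D)\<close> by auto
        qed
      qed
    qed
  qed
qed

lemma GY: assumes u: "u \<in> perms n" and n: "n \<ge> 2" and E: "E \<subseteq> {1..n-1}"
  shows "psi n (Y n (Sof a E)) u = of_nat (if consY (DesA n u) E a n then
     2 ^ (card {p \<in> {1..n}. p \<in> DesA n u \<and> (p = 1 \<or> p-1 \<notin> DesA n u)} + (if 1 \<in> DesA n u then 0 else 1) - 1) else 0)"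
proof -
  let ?D = "DesA n u"
  have D: "?D \<subseteq> {1..n-1}" by (rule DesA_sub)
  have "{N \<in> Ev n. dof n ?D N = Sof a E} = {N. N \<subseteq> {1..n} \<and> (\<forall>j\<in>{1..n}. PY ?D E a j (j \<in> N)) \<and> even (card N)}"
    by (simp only: Ev_eq dof_eq[OF E] locY[OF D n])
  moreover have "card {N. N \<subseteq> {1..n} \<and> (\<forall>j\<in>{1..n}. PY ?D E a j (j \<in> N)) \<and> even (card N)} =
     (if \<forall>j\<in>{1..n}. \<exists>b. PY ?D E a j b then 2 ^ (card {j \<in> {1..n}. \<forall>b. PY ?D E a j b} - 1) else 0)"
  proof (rule count_even)
    have "card {j \<in> {1..n}. \<forall>b. PY ?D E a j b} \<ge> 1"
    proof (cases "1 \<in> ?D")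
      case True
      have "1 \<in> {p \<in> {1..n}. p \<in> ?D \<and> (p = 1 \<or> p-1 \<notin> ?D)}" using True n by auto
      hence "card {p \<in> {1..n}. p \<in> ?D \<and> (p = 1 \<or> p-1 \<notin> ?D)} \<ge> 1"
        by (rule mem_card_ge1) simp
      thus ?thesis unfolding freeY cntY[OF D n] by simp
    next
      case False
      thus ?thesis unfolding freeY cntY[OF D n] by simp
    qed
    hence "{j \<in> {1..n}. \<forall>b. PY ?D E a j b} \<noteq> {}"
    proof (intro notI)
      assume c: "1 \<le> card {j \<in> {1..n}. \<forall>b. PY ?D E a j b}" and e: "{j \<in> {1..n}. \<forall>b. PY ?D E a j b} = {}"
      have "card {j \<in> {1..n}. \<forall>b. PY ?D E a j b} = 0" by (simp only: e card.empty)
      thus False using c by linarith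
    qed
    thus "\<exists>j\<in>{1..n}. \<forall>b. PY ?D E a j b" by blast
  qed simp
  ultimately have "card {N \<in> Ev n. dof n ?D N = Sof a E} =
     (if consY ?D E a n then 2 ^ (card {j \<in> {1..n}. j \<notin> ?D \<and> (j = 1 \<or> j-1 \<in> ?D)} - 1) else 0)"
    by (simp only: consY_eq[OF D n] freeY)
  thus ?thesis by (simp only: psiY[OF u n] cntY[OF D n])
qed

lemma freeX: "{j \<in> {1..n::nat}. \<forall>b. PX D E a j b} = {j \<in> {1..n}. fX D E a j}"
  by (auto simp: PX_def fX_def all_bool_eq)

lemma consX_eq: "(\<exists>b. PX D E a j b) = cX D E a j"
  by (auto simp: PX_def cX_def ex_bool_eq)

lemma cntX: assumes D: "D \<subseteq> {1..n-1}" and E: "E \<subseteq> {1..n-1}" and n: "n \<ge> 2"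
  and c: "\<forall>j\<in>{1..n}. cX D E a j"
  shows "card {j \<in> {1..n}. fX D E a j} = card E + (if a \<or> 1 \<notin> E then 1 else 0)"
proof -
  obtain k where k: "n = k + 2" using n by (metis add.commute le_Suc_ex)
  have "n \<notin> D" using D n by auto
  hence "card {j \<in> {1..n}. fX D E a j} = card {j \<in> {1..k+1}. j \<in> E} + (if a \<or> 1 \<notin> E then 1 else 0)"
    using CX[of k D E a] c k by simp
  moreover have "{j \<in> {1..k+1}. j \<in> E} = E" using E k by auto
  ultimately show ?thesis by simp
qed

lemma GX: assumes u: "u \<in> perms n" and n: "n \<ge> 2" and E: "E \<subseteq> {1..n-1}"
  shows "psi n (X n (Sof a E)) u = of_nat (if \<forall>j\<in>{1..n}. cX (DesA n u) E a j then
     2 ^ (card E + (if a \<or> 1 \<notin> E then 1 else 0) - 1) else 0)"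
proof -
  let ?D = "DesA n u"
  have D: "?D \<subseteq> {1..n-1}" by (rule DesA_sub)
  have fS: "finite (Sof a E)" using E finite_subset[OF E] by (simp add: Sof_def)
  have "{N \<in> Ev n. dof n ?D N \<subseteq> Sof a E} = {N. N \<subseteq> {1..n} \<and> (\<forall>j\<in>{1..n}. PX ?D E a j (j \<in> N)) \<and> even (card N)}"
    by (simp only: Ev_eq dof_sub[OF E] locX[OF D n])
  moreover have "card {N. N \<subseteq> {1..n} \<and> (\<forall>j\<in>{1..n}. PX ?D E a j (j \<in> N)) \<and> even (card N)} =
     (if \<forall>j\<in>{1..n}. \<exists>b. PX ?D E a j b then 2 ^ (card {j \<in> {1..n}. \<forall>b. PX ?D E a j b} - 1) else 0)"
  proof (rule count_even)
    assume "\<forall>j\<in>{1..n}. \<exists>b. PX ?D E a j b"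
    hence c: "\<forall>j\<in>{1..n}. cX ?D E a j" using consX_eq by blast
    have "card {j \<in> {1..n}. \<forall>b. PX ?D E a j b} \<ge> 1"
      unfolding freeX cntX[OF D E n c]
    proof (cases "1 \<in> E")
      case True
      have "card E \<ge> 1" using True finite_subset[OF E] by (intro mem_card_ge1) auto
      thus "1 \<le> card E + (if a \<or> 1 \<notin> E then 1 else 0)" by simp
    qed simp
    hence "{j \<in> {1..n}. \<forall>b. PX ?D E a j b} \<noteq> {}"
    proof (intro notI)
      assume c: "1 \<le> card {j \<in> {1..n}. \<forall>b. PX ?D E a j b}" and e: "{j \<in> {1..n}. \<forall>b. PX ?D E a j b} = {}"
      have "card {j \<in> {1..n}. \<forall>b. PX ?D E a j b} = 0" by (simp only: e card.empty)
      thus False using c by linarith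
    qed
    thus "\<exists>j\<in>{1..n}. \<forall>b. PX ?D E a j b" by blast
  qed simp
  moreover have ce: "(\<forall>j\<in>{1..n}. \<exists>b. PX ?D E a j b) = (\<forall>j\<in>{1..n}. cX ?D E a j)" using consX_eq by blast
  ultimately have "card {N \<in> Ev n. dof n ?D N \<subseteq> Sof a E} = (if \<forall>j\<in>{1..n}. cX ?D E a j then 
     2 ^ (card {j \<in> {1..n}. fX ?D E a j} - 1) else 0)" unfolding freeX by simp
  also have "\<dots> = (if \<forall>j\<in>{1..n}. cX (DesA n u) E a j then
     2 ^ (card E + (if a \<or> 1 \<notin> E then 1 else 0) - 1) else 0)"
    using cntX[OF D E n] by (cases "\<forall>j\<in>{1..n}. cX ?D E a j") simp_all
  finally show ?thesis unfolding psiX[OF u n fS] by simp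
qed

lemma Peak_eq: assumes u: "u \<in> perms n"
  shows "Peak n u = {p \<in> {1..n}. p \<in> DesA n u \<and> (p = 1 \<or> p-1 \<notin> DesA n u)}"
proof -
  have l: "length u = n" by (rule perms_len[OF u])
  have key: "\<And>p. p \<in> {1..n-1} \<Longrightarrow> (uval u (p-1) < uval u p \<and> uval u p > uval u (p+1)) =
     (p \<in> DesA n u \<and> (p = 1 \<or> p-1 \<notin> DesA n u))"
  proof -
    fix p assume p: "p \<in> {1..n-1}"
    have u1: "uval u p = u ! (p-1)" using p by (simp add: uval_def)
    have u2: "uval u (p+1) = u ! p" by (simp add: uval_def)
    have d1: "(p \<in> DesA n u) = (u ! (p-1) > u ! p)" using p by (simp add: DesA_def)
    have s: "(uval u p > uval u (p+1)) = (p \<in> DesA n u)" by (simp only: u1 u2 d1)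
    have f: "(uval u (p-1) < uval u p) = (p = 1 \<or> p-1 \<notin> DesA n u)"
    proof (cases "p = 1")
      case True
      have "u ! 0 \<ge> 1" using perms_pos[OF u, of 0] p by auto
      moreover have "uval u (p-1) = 0" using True by (simp add: uval_def)
      ultimately show ?thesis using True u1 by simp
    next
      case False
      have p2: "p \<ge> 2" "p - 1 - 1 = p - 2" "p - 1 \<noteq> 0" using p False by auto
      have ne: "u ! (p-2) \<noteq> u ! (p-1)"
      proof
        assume "u ! (p-2) = u ! (p-1)"
        moreover have "p - 2 < length u" "p - 1 < length u" using p l by auto
        ultimately have "p - 2 = p - 1" using perms_dist[OF u] nth_eq_iff_index_eq by blast
        thus False using p2 by simp
      qed
      have u0: "uval u (p-1) = u ! (p-2)" using p2 by (simp add: uval_def)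
      have "p - 1 \<in> {1..n-1}" using p p2 by auto
      hence "(p-1 \<in> DesA n u) = (u ! (p-2) > u ! (p-1))" using p2 by (simp add: DesA_def)
      thus ?thesis using False u0 u1 ne by auto
    qed
    show "?thesis p" using s f by blast
  qed
  have nD: "n \<notin> DesA n u" by (auto simp: DesA_def)
  show ?thesis
  proof (rule set_eqI)
    fix p
    show "(p \<in> Peak n u) = (p \<in> {p \<in> {1..n}. p \<in> DesA n u \<and> (p = 1 \<or> p-1 \<notin> DesA n u)})"
    proof (cases "p \<in> {1..n-1}")
      case True
      thus ?thesis using key[OF True] unfolding Peak_def by auto
    next
      case False
      have "p \<notin> DesA n u" using False by (auto simp: DesA_def)
      thus ?thesis using False unfolding Peak_def by auto
    qed
  qed
qed

lemma shift1_mem: "(p \<in> shift1 J) = (p \<noteq> 0 \<and> p - 1 \<in> J)"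
proof
  assume "p \<in> shift1 J" thus "p \<noteq> 0 \<and> p - 1 \<in> J" by (auto simp: shift1_def)
next
  assume "p \<noteq> 0 \<and> p - 1 \<in> J"
  hence "p = (p - 1) + 1" "p - 1 \<in> J" by auto
  thus "p \<in> shift1 J" unfolding shift1_def by blast
qed

lemma symdiff_mem: "(p \<in> symdiff A C) = ((p \<in> A) \<noteq> (p \<in> C))"
  by (auto simp: symdiff_def)

abbreviation PkD :: "nat \<Rightarrow> nat set \<Rightarrow> nat set" where
  "PkD n D \<equiv> {p \<in> {1..n}. p \<in> D \<and> (p = 1 \<or> p-1 \<notin> D)}"

lemma Peak_Fn: assumes u: "u \<in> perms n" shows "Peak n u \<in> Fn n"
proof -
  have D: "DesA n u \<subseteq> {1..n-1}" by (rule DesA_sub)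
  have "Peak n u \<subseteq> {1..n-1}" unfolding Peak_eq[OF u] using D by auto
  moreover have "\<forall>i\<in>Peak n u. i + 1 \<notin> Peak n u" unfolding Peak_eq[OF u] by auto
  ultimately show ?thesis unfolding Fn_def by simp
qed

lemma P_perm: "u \<in> perms n \<Longrightarrow> P n F u = (if F = Peak n u then 1 else 0)"
  unfolding P_def by auto

lemma P_nperm: "u \<notin> perms n \<Longrightarrow> P n F u = 0"
  unfolding P_def by auto

lemma R1: assumes fin: "finite FF" and u: "u \<in> perms n"
  shows "(\<Sum>F\<in>FF. c F * P n F u) = (if Peak n u \<in> FF then c (Peak n u) else 0)"
proof -
  have "(\<Sum>F\<in>FF. c F * P n F u) = (\<Sum>F\<in>FF. if F = Peak n u then c F else 0)"
    using P_perm[OF u] by (intro sum.cong) auto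
  also have "\<dots> = (if Peak n u \<in> FF then c (Peak n u) else 0)"
    using fin by (rule sum.delta)
  finally show ?thesis .
qed

lemma R2: assumes fin: "finite FF" and no1: "\<forall>F\<in>FF. 1 \<notin> F" and u: "u \<in> perms n"
  shows "(\<Sum>F\<in>FF. c F * P n (insert 1 F) u) =
    (if 1 \<in> Peak n u \<and> Peak n u - {1} \<in> FF then c (Peak n u - {1}) else 0)"
proof -
  have "(\<Sum>F\<in>FF. c F * P n (insert 1 F) u) =
     (\<Sum>F\<in>FF. if F = Peak n u - {1} then (if 1 \<in> Peak n u then c F else 0) else 0)"
  proof (intro sum.cong refl)
    fix F assume F: "F \<in> FF"
    hence "1 \<notin> F" using no1 by blast
    hence "(insert 1 F = Peak n u) = (1 \<in> Peak n u \<and> F = Peak n u - {1})" by auto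
    thus "c F * P n (insert 1 F) u = (if F = Peak n u - {1} then (if 1 \<in> Peak n u then c F else 0) else 0)"
      using P_perm[OF u] by auto
  qed
  also have "\<dots> = (if Peak n u - {1} \<in> FF then (if 1 \<in> Peak n u then c (Peak n u - {1}) else 0) else 0)"
    using fin by (rule sum.delta)
  finally show ?thesis by simp
qed

lemma PkSub: assumes D: "D \<subseteq> {1..n-1}"
  shows "(PkD n D \<subseteq> S) = ((1 \<in> D \<longrightarrow> 1 \<in> S) \<and> (\<forall>p\<in>{2..n-1}. p \<in> D \<and> p-1 \<notin> D \<longrightarrow> p \<in> S))"
proof
  assume h: "PkD n D \<subseteq> S"
  show "(1 \<in> D \<longrightarrow> 1 \<in> S) \<and> (\<forall>p\<in>{2..n-1}. p \<in> D \<and> p-1 \<notin> D \<longrightarrow> p \<in> S)"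
  proof
    show "1 \<in> D \<longrightarrow> 1 \<in> S"
    proof
      assume "1 \<in> D" hence "1 \<le> n" using D by auto
      hence "1 \<in> PkD n D" using \<open>1 \<in> D\<close> by auto
      thus "1 \<in> S" using h by blast
    qed
    show "\<forall>p\<in>{2..n-1}. p \<in> D \<and> p-1 \<notin> D \<longrightarrow> p \<in> S"
    proof (intro ballI impI)
      fix p assume "p \<in> {2..n-1}" "p \<in> D \<and> p-1 \<notin> D"
      hence "p \<in> PkD n D" by auto
      thus "p \<in> S" using h by blast
    qed
  qed
next
  assume h: "(1 \<in> D \<longrightarrow> 1 \<in> S) \<and> (\<forall>p\<in>{2..n-1}. p \<in> D \<and> p-1 \<notin> D \<longrightarrow> p \<in> S)"
  show "PkD n D \<subseteq> S"
  proof
    fix p assume p: "p \<in> PkD n D"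
    show "p \<in> S"
    proof (cases "p = 1")
      case True thus ?thesis using h p by auto
    next
      case False
      hence "p \<in> {2..n-1}" using p D by auto
      thus ?thesis using h p False by auto
    qed
  qed
qed

lemma Ygen: assumes u: "u \<in> perms n" and n: "n \<ge> 2" and E: "E \<subseteq> {1..n-1}" and fin: "finite FF"
  and hc: "consY (DesA n u) E a n = (Peak n u \<in> FF)"
  and he: "consY (DesA n u) E a n \<Longrightarrow> card (Peak n u) + (if 1 \<in> DesA n u then 0 else 1) - 1 = card (Peak n u)"
  shows "psi n (Y n (Sof a E)) u = (\<Sum>F\<in>FF. 2 ^ card F * P n F u)"
proof -
  have "psi n (Y n (Sof a E)) u = of_nat (if consY (DesA n u) E a n then
     2 ^ (card (Peak n u) + (if 1 \<in> DesA n u then 0 else 1) - 1) else 0)"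
    using GY[OF u n E] Peak_eq[OF u] by simp
  also have "\<dots> = (if Peak n u \<in> FF then 2 ^ card (Peak n u) else 0)"
    using hc he by (cases "consY (DesA n u) E a n") simp_all
  also have "\<dots> = (\<Sum>F\<in>FF. 2 ^ card F * P n F u)" using R1[OF fin u] by simp
  finally show ?thesis .
qed

lemma Ygen2: assumes u: "u \<in> perms n" and n: "n \<ge> 2" and E: "E \<subseteq> {1..n-1}" and fin: "finite FF"
  and no1: "\<forall>F\<in>FF. 1 \<notin> F"
  and hc: "consY (DesA n u) E a n = (1 \<in> Peak n u \<and> Peak n u - {1} \<in> FF)"
  and he: "consY (DesA n u) E a n \<Longrightarrow> card (Peak n u) + (if 1 \<in> DesA n u then 0 else 1) - 1 = card (Peak n u - {1})"
  shows "psi n (Y n (Sof a E)) u = (\<Sum>F\<in>FF. 2 ^ card F * P n (insert 1 F) u)"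
proof -
  have "psi n (Y n (Sof a E)) u = of_nat (if consY (DesA n u) E a n then
     2 ^ (card (Peak n u) + (if 1 \<in> DesA n u then 0 else 1) - 1) else 0)"
    using GY[OF u n E] Peak_eq[OF u] by simp
  also have "\<dots> = (if 1 \<in> Peak n u \<and> Peak n u - {1} \<in> FF then 2 ^ card (Peak n u - {1}) else 0)"
    using hc he by (cases "consY (DesA n u) E a n") simp_all
  also have "\<dots> = (\<Sum>F\<in>FF. 2 ^ card F * P n (insert 1 F) u)" using R2[OF fin no1 u] by simp
  finally show ?thesis .
qed

lemma Xgen: assumes u: "u \<in> perms n" and n: "n \<ge> 2" and E: "E \<subseteq> {1..n-1}" and fin: "finite FF"
  and hc: "(\<forall>j\<in>{1..n}. cX (DesA n u) E a j) = (Peak n u \<in> FF)"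
  and he: "card E + (if a \<or> 1 \<notin> E then 1 else 0) - 1 = k"
  shows "psi n (X n (Sof a E)) u = 2 ^ k * (\<Sum>F\<in>FF. P n F u)"
proof -
  have "psi n (X n (Sof a E)) u = of_nat (if Peak n u \<in> FF then 2 ^ k else 0)"
    using GX[OF u n E] hc he by simp
  also have "\<dots> = 2 ^ k * (if Peak n u \<in> FF then 1 else 0)" by simp
  also have "(if Peak n u \<in> FF then 1 else 0) = (\<Sum>F\<in>FF. 1 * P n F u)"
    using R1[OF fin u, of "\<lambda>_. 1"] by simp
  finally show ?thesis by simp
qed

lemma caseY1: assumes u: "u \<in> perms n" and n: "n \<ge> 2" and J: "J \<subseteq> {2..n-1}"
  shows "psi n (Y n (Nd ` J)) u =
    (\<Sum>F\<in>{F. F \<in> Fn n \<and> F \<subseteq> symdiff J (shift1 J)}. 2 ^ card F * P n F u)"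
proof -
  let ?D = "DesA n u" and ?S = "symdiff J (shift1 J)"
  have D: "?D \<subseteq> {1..n-1}" by (rule DesA_sub)
  have E: "J \<subseteq> {1..n-1}" using J by auto
  have j1: "1 \<notin> J" using J by auto
  have fJ: "finite J" using finite_subset[OF J] by simp
  have fin: "finite {F. F \<in> Fn n \<and> F \<subseteq> ?S}"
    by (rule finite_subset[of _ "Pow ?S"]) (auto simp: symdiff_def shift1_def fJ)
  have m1: "1 \<notin> ?S" using j1 J by (auto simp add: symdiff_mem shift1_mem)
  have mp: "\<And>p. p \<in> {2..n-1} \<Longrightarrow> (p \<in> ?S) = ((p \<in> J) = (p-1 \<notin> J))"
    by (auto simp: symdiff_mem shift1_mem)
  have c1: "consY ?D J False n = (1 \<notin> ?D \<and> (\<forall>p\<in>{2..n-1}. p \<in> ?D \<and> p-1 \<notin> ?D \<longrightarrow> (p \<in> J) = (p-1 \<notin> J)))"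
    unfolding consY_def using j1 by auto
  have c2: "(Peak n u \<in> {F. F \<in> Fn n \<and> F \<subseteq> ?S}) =
     (1 \<notin> ?D \<and> (\<forall>p\<in>{2..n-1}. p \<in> ?D \<and> p-1 \<notin> ?D \<longrightarrow> (p \<in> J) = (p-1 \<notin> J)))"
  proof -
    have "(Peak n u \<in> {F. F \<in> Fn n \<and> F \<subseteq> ?S}) = (PkD n ?D \<subseteq> ?S)"
      using Peak_Fn[OF u] Peak_eq[OF u] by simp
    also have "\<dots> = ((1 \<in> ?D \<longrightarrow> 1 \<in> ?S) \<and> (\<forall>p\<in>{2..n-1}. p \<in> ?D \<and> p-1 \<notin> ?D \<longrightarrow> p \<in> ?S))"
      by (rule PkSub[OF D])
    also have "\<dots> = (1 \<notin> ?D \<and> (\<forall>p\<in>{2..n-1}. p \<in> ?D \<and> p-1 \<notin> ?D \<longrightarrow> (p \<in> J) = (p-1 \<notin> J)))"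
      using m1 mp by auto
    finally show ?thesis .
  qed
  have "psi n (Y n (Sof False J)) u = (\<Sum>F\<in>{F. F \<in> Fn n \<and> F \<subseteq> ?S}. 2 ^ card F * P n F u)"
  proof (rule Ygen[OF u n E fin])
    show "consY ?D J False n = (Peak n u \<in> {F. F \<in> Fn n \<and> F \<subseteq> ?S})" using c1 c2 by simp
    assume "consY ?D J False n"
    hence "1 \<notin> ?D" using c1 by simp
    thus "card (Peak n u) + (if 1 \<in> ?D then 0 else 1) - 1 = card (Peak n u)" by simp
  qed
  thus ?thesis by (simp add: Sof_def)
qed

lemma caseY23: assumes u: "u \<in> perms n" and n: "n \<ge> 2" and J: "J \<subseteq> {2..n-1}"
  and E: "(E = insert 1 J \<and> a = False) \<or> (E = J \<and> a = True)"
  shows "psi n (Y n (Sof a E)) u =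
    (\<Sum>F\<in>{F. insert 1 F \<in> Fn n \<and> F \<subseteq> symdiff J (shift1 J)}. 2 ^ card F * P n (insert 1 F) u)"
proof -
  let ?D = "DesA n u" and ?S = "symdiff J (shift1 J)"
  let ?FF = "{F. insert 1 F \<in> Fn n \<and> F \<subseteq> ?S}"
  have D: "?D \<subseteq> {1..n-1}" by (rule DesA_sub)
  have j1: "1 \<notin> J" "0 \<notin> J" using J by auto
  have EE: "E \<subseteq> {1..n-1}" using J E n by auto
  have fJ: "finite J" using finite_subset[OF J] by simp
  have fin: "finite ?FF"
    by (rule finite_subset[of _ "Pow ?S"]) (auto simp: symdiff_def shift1_def fJ)
  have m1: "1 \<notin> ?S" using j1 by (auto simp add: symdiff_mem shift1_mem)
  have no1: "\<forall>F\<in>?FF. 1 \<notin> F" using m1 by blast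
  have mp: "\<And>p. p \<in> {2..n-1} \<Longrightarrow> (p \<in> insert 1 ?S) = ((p \<in> J) = (p-1 \<notin> J))"
    by (auto simp: symdiff_mem shift1_mem)
  have c1: "consY ?D E a n = (1 \<in> ?D \<and> (\<forall>p\<in>{2..n-1}. p \<in> ?D \<and> p-1 \<notin> ?D \<longrightarrow> (p \<in> J) = (p-1 \<notin> J)))"
  proof (cases "1 \<in> ?D")
    case True
    have "\<And>p. p \<in> {2..n-1} \<Longrightarrow> p-1 \<notin> ?D \<Longrightarrow> p \<noteq> 2 \<and> p - 1 \<noteq> 1" using True by auto
    thus ?thesis using E j1 True unfolding consY_def by auto
  next
    case False
    thus ?thesis using E j1 unfolding consY_def by auto
  qed
  have pk1: "(1 \<in> Peak n u) = (1 \<in> ?D)" using Peak_eq[OF u] n by auto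
  have c2: "(1 \<in> Peak n u \<and> Peak n u - {1} \<in> ?FF) =
     (1 \<in> ?D \<and> (\<forall>p\<in>{2..n-1}. p \<in> ?D \<and> p-1 \<notin> ?D \<longrightarrow> (p \<in> J) = (p-1 \<notin> J)))"
  proof (cases "1 \<in> ?D")
    case True
    hence "insert 1 (Peak n u - {1}) = Peak n u" using pk1 by auto
    hence "(Peak n u - {1} \<in> ?FF) = (Peak n u \<subseteq> insert 1 ?S)" using Peak_Fn[OF u] by auto
    also have "\<dots> = (PkD n ?D \<subseteq> insert 1 ?S)" using Peak_eq[OF u] by simp
    also have "\<dots> = ((1 \<in> ?D \<longrightarrow> 1 \<in> insert 1 ?S) \<and> (\<forall>p\<in>{2..n-1}. p \<in> ?D \<and> p-1 \<notin> ?D \<longrightarrow> p \<in> insert 1 ?S))"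
      by (rule PkSub[OF D])
    also have "\<dots> = (\<forall>p\<in>{2..n-1}. p \<in> ?D \<and> p-1 \<notin> ?D \<longrightarrow> (p \<in> J) = (p-1 \<notin> J))"
      using mp by auto
    finally show ?thesis using True pk1 by simp
  next
    case False thus ?thesis using pk1 by simp
  qed
  show ?thesis
  proof (rule Ygen2[OF u n EE fin no1])
    show "consY ?D E a n = (1 \<in> Peak n u \<and> Peak n u - {1} \<in> ?FF)" using c1 c2 by simp
    assume "consY ?D E a n"
    hence "1 \<in> Peak n u" using c1 pk1 by simp
    moreover have "finite (Peak n u)" using Peak_eq[OF u] by simp
    ultimately show "card (Peak n u) + (if 1 \<in> ?D then 0 else 1) - 1 = card (Peak n u - {1})"
      using pk1 by simp
  qed
qed

lemma caseY4: assumes u: "u \<in> perms n" and n: "n \<ge> 2" and J: "J \<subseteq> {2..n-1}"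
  shows "psi n (Y n (insert OneP (insert (Nd 1) (Nd ` J)))) u =
    (\<Sum>F\<in>{F. F \<in> Fn n \<and> F \<subseteq> symdiff J (insert 2 (shift1 J))}. 2 ^ card F * P n F u)"
proof -
  let ?D = "DesA n u" and ?S = "symdiff J (insert 2 (shift1 J))" and ?E = "insert 1 J"
  have D: "?D \<subseteq> {1..n-1}" by (rule DesA_sub)
  have E: "?E \<subseteq> {1..n-1}" using J n by auto
  have j1: "1 \<notin> J" "0 \<notin> J" using J by auto
  have fJ: "finite J" using finite_subset[OF J] by simp
  have fin: "finite {F. F \<in> Fn n \<and> F \<subseteq> ?S}"
    by (rule finite_subset[of _ "Pow ?S"]) (auto simp: symdiff_def shift1_def fJ)
  have m1: "1 \<notin> ?S" using j1 by (auto simp add: symdiff_mem shift1_mem)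
  have mp: "\<And>p. p \<in> {2..n-1} \<Longrightarrow> (p \<in> ?S) = ((p \<in> ?E) = (p-1 \<notin> ?E))"
  proof -
    fix p assume p: "p \<in> {2..n-1}"
    show "(p \<in> ?S) = ((p \<in> ?E) = (p-1 \<notin> ?E))"
    proof (cases "p = 2")
      case True thus ?thesis by (auto simp: symdiff_mem shift1_mem)
    next
      case False
      hence "p - 1 \<noteq> 1" "p \<noteq> 1" "p \<noteq> 0" using p by auto
      thus ?thesis using False by (auto simp: symdiff_mem shift1_mem)
    qed
  qed
  have c1: "consY ?D ?E True n = (1 \<notin> ?D \<and> (\<forall>p\<in>{2..n-1}. p \<in> ?D \<and> p-1 \<notin> ?D \<longrightarrow> (p \<in> ?E) = (p-1 \<notin> ?E)))"
    unfolding consY_def by auto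
  have c2: "(Peak n u \<in> {F. F \<in> Fn n \<and> F \<subseteq> ?S}) =
     (1 \<notin> ?D \<and> (\<forall>p\<in>{2..n-1}. p \<in> ?D \<and> p-1 \<notin> ?D \<longrightarrow> (p \<in> ?E) = (p-1 \<notin> ?E)))"
  proof -
    have "(Peak n u \<in> {F. F \<in> Fn n \<and> F \<subseteq> ?S}) = (PkD n ?D \<subseteq> ?S)"
      using Peak_Fn[OF u] Peak_eq[OF u] by simp
    also have "\<dots> = ((1 \<in> ?D \<longrightarrow> 1 \<in> ?S) \<and> (\<forall>p\<in>{2..n-1}. p \<in> ?D \<and> p-1 \<notin> ?D \<longrightarrow> p \<in> ?S))"
      by (rule PkSub[OF D])
    also have "\<dots> = (1 \<notin> ?D \<and> (\<forall>p\<in>{2..n-1}. p \<in> ?D \<and> p-1 \<notin> ?D \<longrightarrow> (p \<in> ?E) = (p-1 \<notin> ?E)))"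
      using m1 mp by auto
    finally show ?thesis .
  qed
  have "psi n (Y n (Sof True ?E)) u = (\<Sum>F\<in>{F. F \<in> Fn n \<and> F \<subseteq> ?S}. 2 ^ card F * P n F u)"
  proof (rule Ygen[OF u n E fin])
    show "consY ?D ?E True n = (Peak n u \<in> {F. F \<in> Fn n \<and> F \<subseteq> ?S})" using c1 c2 by simp
    assume "consY ?D ?E True n"
    hence "1 \<notin> ?D" using c1 by simp
    thus "card (Peak n u) + (if 1 \<in> ?D then 0 else 1) - 1 = card (Peak n u)" by simp
  qed
  thus ?thesis by (simp add: Sof_def)
qed

lemma Xcond: assumes "\<And>j. j \<in> {1..n} \<Longrightarrow> cX D E a j = (j \<in> D \<and> (j = 1 \<or> j-1 \<notin> D) \<longrightarrow> j \<in> T)"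
  shows "(\<forall>j\<in>{1..n}. cX D E a j) = (PkD n D \<subseteq> T)"
  using assms by auto

lemma caseX: assumes u: "u \<in> perms n" and n: "n \<ge> 2" and J: "J \<subseteq> {2..n-1}"
  and E: "E = J \<or> E = insert 1 J" and T: "T = J \<union> shift1 J \<union> (if a \<or> E \<noteq> J then {1} else {}) \<union> (if a \<and> E \<noteq> J then {2} else {})"
  and k: "k = card J + (if a \<and> E \<noteq> J then 1 else 0)"
  shows "psi n (X n (Sof a E)) u = 2 ^ k * (\<Sum>F\<in>{F. F \<in> Fn n \<and> F \<subseteq> T}. P n F u)"
proof -
  let ?D = "DesA n u"
  have D: "?D \<subseteq> {1..n-1}" by (rule DesA_sub)
  have EE: "E \<subseteq> {1..n-1}" using J E n by auto
  have j1: "1 \<notin> J" "0 \<notin> J" using J by auto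
  have fJ: "finite J" using finite_subset[OF J] by simp
  have fT: "finite T" using fJ T by (simp add: shift1_def)
  have fin: "finite {F. F \<in> Fn n \<and> F \<subseteq> T}"
    by (rule finite_subset[of _ "Pow T"]) (auto simp: fT)
  have pw: "\<And>j. j \<in> {1..n} \<Longrightarrow> cX ?D E a j = (j \<in> ?D \<and> (j = 1 \<or> j-1 \<notin> ?D) \<longrightarrow> j \<in> T)"
  proof -
    fix j assume j: "j \<in> {1..n}"
    consider "j = 1" | "j = 2" | "j \<ge> 3" using j by force
    thus "cX ?D E a j = (j \<in> ?D \<and> (j = 1 \<or> j-1 \<notin> ?D) \<longrightarrow> j \<in> T)"
    proof cases
      case 1 thus ?thesis using E T j1 by (auto simp: cX_def shift1_mem)
    next
      case 2 thus ?thesis using E T j1 by (auto simp: cX_def shift1_mem)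
    next
      case 3
      hence "j \<noteq> 1" "j \<noteq> 2" "j - 1 \<noteq> 1" "j \<noteq> 0" "2 \<le> j" by auto
      thus ?thesis using E T j1 by (auto simp: cX_def shift1_mem)
    qed
  qed
  show ?thesis
  proof (rule Xgen[OF u n EE fin])
    show "(\<forall>j\<in>{1..n}. cX ?D E a j) = (Peak n u \<in> {F. F \<in> Fn n \<and> F \<subseteq> T})"
      using Xcond[OF pw] Peak_Fn[OF u] Peak_eq[OF u] by simp
    show "card E + (if a \<or> 1 \<notin> E then 1 else 0) - 1 = k"
      using E k j1 fJ by auto
  qed
qed

lemma first_part: assumes n: "n \<ge> 2" and f: "f \<in> SigmaD n" shows "psi n f \<in> SigmaA n"
proof -
  obtain c where fc: "f = (\<lambda>w. \<Sum>J\<in>Pow (dlabels n). c J * Y n J w)" using f unfolding SigmaD_def by blast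
  define d where "d K = (\<Sum>J\<in>Pow (dlabels n). c J * of_nat (card {N \<in> Ev n. dof n K N = J}))" for K
  have "psi n f = (\<lambda>u. \<Sum>K\<in>Pow {1..n-1}. d K * B n K u)"
  proof
    fix u
    show "psi n f u = (\<Sum>K\<in>Pow {1..n-1}. d K * B n K u)"
    proof (cases "u \<in> perms n")
      case True
      have "psi n f u = (\<Sum>J\<in>Pow (dlabels n). c J * psi n (Y n J) u)"
        unfolding fc psi_def by (simp add: sum_distrib_left sum.swap[of _ _ "Pow (dlabels n)"])
      also have "\<dots> = d (DesA n u)" unfolding d_def using psiY[OF True n] by simp
      also have "\<dots> = (\<Sum>K\<in>Pow {1..n-1}. if K = DesA n u then d K else 0)"
        using DesA_sub[of n u] by (subst sum.delta) auto
      also have "\<dots> = (\<Sum>K\<in>Pow {1..n-1}. d K * B n K u)"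
        unfolding B_def using True by (intro sum.cong) auto
      finally show ?thesis .
    next
      case False
      thus ?thesis using psi_nperm[OF False] by (simp add: B_def)
    qed
  qed
  thus ?thesis unfolding SigmaA_def by blast
qed

theorem proposition3p6:
  fixes n :: nat
  assumes "n \<ge> 2"
  shows "(\<forall>f\<in>SigmaD n. psi n f \<in> SigmaA n) \<and>
    (\<forall>J. J \<subseteq> {2..n-1} \<longrightarrow>
      psi n (Y n (Nd ` J)) =
        (\<lambda>u. \<Sum>F\<in>{F. F \<in> Fn n \<and> F \<subseteq> symdiff J (shift1 J)}. 2 ^ card F * P n F u)
    \<and> psi n (Y n (insert (Nd 1) (Nd ` J))) =
        (\<lambda>u. \<Sum>F\<in>{F. insert 1 F \<in> Fn n \<and> F \<subseteq> symdiff J (shift1 J)}.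
               2 ^ card F * P n (insert 1 F) u)
    \<and> psi n (Y n (insert OneP (Nd ` J))) =
        (\<lambda>u. \<Sum>F\<in>{F. insert 1 F \<in> Fn n \<and> F \<subseteq> symdiff J (shift1 J)}.
               2 ^ card F * P n (insert 1 F) u)
    \<and> psi n (Y n (insert OneP (insert (Nd 1) (Nd ` J)))) =
        (\<lambda>u. \<Sum>F\<in>{F. F \<in> Fn n \<and> F \<subseteq> symdiff J (insert 2 (shift1 J))}. 2 ^ card F * P n F u)
    \<and> psi n (X n (Nd ` J)) =
        (\<lambda>u. 2 ^ card J * (\<Sum>F\<in>{F. F \<in> Fn n \<and> F \<subseteq> J \<union> shift1 J}. P n F u))
    \<and> psi n (X n (insert (Nd 1) (Nd ` J))) =
        (\<lambda>u. 2 ^ card J * (\<Sum>F\<in>{F. F \<in> Fn n \<and> F \<subseteq> J \<union> shift1 J \<union> {1}}. P n F u))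
    \<and> psi n (X n (insert OneP (Nd ` J))) =
        (\<lambda>u. 2 ^ card J * (\<Sum>F\<in>{F. F \<in> Fn n \<and> F \<subseteq> J \<union> shift1 J \<union> {1}}. P n F u))
    \<and> psi n (X n (insert OneP (insert (Nd 1) (Nd ` J)))) =
        (\<lambda>u. 2 ^ (card J + 1) * (\<Sum>F\<in>{F. F \<in> Fn n \<and> F \<subseteq> J \<union> shift1 J \<union> {1, 2}}. P n F u)))"
proof (intro conjI allI impI)
  show "\<forall>f\<in>SigmaD n. psi n f \<in> SigmaA n" using first_part[OF assms] by blast
next
  fix J assume J: "J \<subseteq> {2..n-1}"
  have n: "n \<ge> 2" by (rule assms)
  have j1: "1 \<notin> J" using J by auto
  have s2: "insert (Nd 1) (Nd ` J) = Sof False (insert 1 J)" by (simp add: Sof_def)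
  have s3: "insert OneP (Nd ` J) = Sof True J" by (simp add: Sof_def)
  have s5: "Nd ` J = Sof False J" by (simp add: Sof_def)
  have s8: "insert OneP (insert (Nd 1) (Nd ` J)) = Sof True (insert 1 J)" by (simp add: Sof_def)
  show "psi n (Y n (Nd ` J)) =
        (\<lambda>u. (\<Sum>F\<in>{F. F \<in> Fn n \<and> F \<subseteq> symdiff J (shift1 J)}. 2 ^ card F * P n F u))"
  proof
    fix u show "psi n (Y n (Nd ` J)) u = (\<Sum>F\<in>{F. F \<in> Fn n \<and> F \<subseteq> symdiff J (shift1 J)}. 2 ^ card F * P n F u)"
    proof (cases "u \<in> perms n")
      case True show ?thesis using caseY1[OF True n J] by simp
    next
      case False thus ?thesis by (simp add: psi_nperm P_nperm)
    qed
  qed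
  show "psi n (Y n (insert (Nd 1) (Nd ` J))) =
        (\<lambda>u. (\<Sum>F\<in>{F. insert 1 F \<in> Fn n \<and> F \<subseteq> symdiff J (shift1 J)}.
               2 ^ card F * P n (insert 1 F) u))"
  proof
    fix u show "psi n (Y n (insert (Nd 1) (Nd ` J))) u = (\<Sum>F\<in>{F. insert 1 F \<in> Fn n \<and> F \<subseteq> symdiff J (shift1 J)}.
               2 ^ card F * P n (insert 1 F) u)"
    proof (cases "u \<in> perms n")
      case True show ?thesis unfolding s2 using caseY23[OF True n J, of "insert 1 J" False] by simp
    next
      case False thus ?thesis by (simp add: psi_nperm P_nperm)
    qed
  qed
  show "psi n (Y n (insert OneP (Nd ` J))) =
        (\<lambda>u. (\<Sum>F\<in>{F. insert 1 F \<in> Fn n \<and> F \<subseteq> symdiff J (shift1 J)}.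
               2 ^ card F * P n (insert 1 F) u))"
  proof
    fix u show "psi n (Y n (insert OneP (Nd ` J))) u = (\<Sum>F\<in>{F. insert 1 F \<in> Fn n \<and> F \<subseteq> symdiff J (shift1 J)}.
               2 ^ card F * P n (insert 1 F) u)"
    proof (cases "u \<in> perms n")
      case True show ?thesis unfolding s3 using caseY23[OF True n J, of J True] by simp
    next
      case False thus ?thesis by (simp add: psi_nperm P_nperm)
    qed
  qed
  show "psi n (Y n (insert OneP (insert (Nd 1) (Nd ` J)))) =
        (\<lambda>u. (\<Sum>F\<in>{F. F \<in> Fn n \<and> F \<subseteq> symdiff J (insert 2 (shift1 J))}. 2 ^ card F * P n F u))"
  proof
    fix u show "psi n (Y n (insert OneP (insert (Nd 1) (Nd ` J)))) u = (\<Sum>F\<in>{F. F \<in> Fn n \<and> F \<subseteq> symdiff J (insert 2 (shift1 J))}. 2 ^ card F * P n F u)"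
    proof (cases "u \<in> perms n")
      case True show ?thesis using caseY4[OF True n J] by simp
    next
      case False thus ?thesis by (simp add: psi_nperm P_nperm)
    qed
  qed
  show "psi n (X n (Nd ` J)) =
        (\<lambda>u. 2 ^ card J * (\<Sum>F\<in>{F. F \<in> Fn n \<and> F \<subseteq> J \<union> shift1 J}. P n F u))"
  proof
    fix u show "psi n (X n (Nd ` J)) u = 2 ^ card J * (\<Sum>F\<in>{F. F \<in> Fn n \<and> F \<subseteq> J \<union> shift1 J}. P n F u)"
    proof (cases "u \<in> perms n")
      case True show ?thesis unfolding s5 by (rule caseX[OF True n J, of J "J \<union> shift1 J" False "card J"]) (use j1 in auto)
    next
      case False thus ?thesis by (simp add: psi_nperm P_nperm)
    qed
  qed
  show "psi n (X n (insert (Nd 1) (Nd ` J))) =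
        (\<lambda>u. 2 ^ card J * (\<Sum>F\<in>{F. F \<in> Fn n \<and> F \<subseteq> J \<union> shift1 J \<union> {1}}. P n F u))"
  proof
    fix u show "psi n (X n (insert (Nd 1) (Nd ` J))) u = 2 ^ card J * (\<Sum>F\<in>{F. F \<in> Fn n \<and> F \<subseteq> J \<union> shift1 J \<union> {1}}. P n F u)"
    proof (cases "u \<in> perms n")
      case True show ?thesis unfolding s2 by (rule caseX[OF True n J, of "insert 1 J" "J \<union> shift1 J \<union> {1}" False "card J"]) (use j1 in auto)
    next
      case False thus ?thesis by (simp add: psi_nperm P_nperm)
    qed
  qed
  show "psi n (X n (insert OneP (Nd ` J))) =
        (\<lambda>u. 2 ^ card J * (\<Sum>F\<in>{F. F \<in> Fn n \<and> F \<subseteq> J \<union> shift1 J \<union> {1}}. P n F u))"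
  proof
    fix u show "psi n (X n (insert OneP (Nd ` J))) u = 2 ^ card J * (\<Sum>F\<in>{F. F \<in> Fn n \<and> F \<subseteq> J \<union> shift1 J \<union> {1}}. P n F u)"
    proof (cases "u \<in> perms n")
      case True show ?thesis unfolding s3 by (rule caseX[OF True n J, of J "J \<union> shift1 J \<union> {1}" True "card J"]) (use j1 in auto)
    next
      case False thus ?thesis by (simp add: psi_nperm P_nperm)
    qed
  qed
  show "psi n (X n (insert OneP (insert (Nd 1) (Nd ` J)))) =
        (\<lambda>u. 2 ^ (card J + 1) * (\<Sum>F\<in>{F. F \<in> Fn n \<and> F \<subseteq> J \<union> shift1 J \<union> {1, 2}}. P n F u))"
  proof
    fix u show "psi n (X n (insert OneP (insert (Nd 1) (Nd ` J)))) u = 2 ^ (card J + 1) * (\<Sum>F\<in>{F. F \<in> Fn n \<and> F \<subseteq> J \<union> shift1 J \<union> {1, 2}}. P n F u)"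
    proof (cases "u \<in> perms n")
      case True show ?thesis unfolding s8 by (rule caseX[OF True n J, of "insert 1 J" "J \<union> shift1 J \<union> {1, 2}" True "card J + 1"]) (use j1 in auto)
    next
      case False thus ?thesis by (simp add: psi_nperm P_nperm)
    qed
  qed
qed

end
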